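(* Let $s\ge1$ and $n\ge0$ be integers. If $n\leq s$, then $A_{231,321}(U_{\mathrm{spine}=s,n}^\alpha)=1$. If $n>s$, then \[A_{231,321}(U_{\mathrm{spine}=s,n}^\alpha)=\sum_{j=1}^sA_{231,321}(U_{\mathrm{spine}=s,n-j}^\alpha).\]
   Context: For integers $s\ge1$ and $n\ge 0$, the labeled uneven comb $U^\alpha_{\mathrm{spine}=s,n}$ is the poset on $\{1,\dots,n\}$ whose order is generated by the covering relations $i\lessdot i+1$ for $1\le i\le s-1$ with $i+1\le n$, and $i\lessdot i+s$ whenever $i+s\le n$. A linear extension is viewed as a permutation of $[n]$ in which $x$ precedes $y$ whenever $x<y$ in the poset. $A_{231,321}(P)$ denotes the number of linear extensions of $P$ that avoid both patterns $231$ and $321$. *)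

theory Defs
  imports Main
begin

definition comb_cover :: "nat \<Rightarrow> nat \<Rightarrow> (nat \<times> nat) set" where
  "comb_cover s n =
     {(i, i + 1) | i. 1 \<le> i \<and> i \<le> s - 1 \<and> i + 1 \<le> n}
   \<union> {(i, i + s) | i. 1 \<le> i \<and> i + s \<le> n}"

definition comb_le :: "nat \<Rightarrow> nat \<Rightarrow> nat \<Rightarrow> nat \<Rightarrow> bool" where
  "comb_le s n x y \<longleftrightarrow> (x, y) \<in> (comb_cover s n)\<^sup>*"

definition comb_linext :: "nat \<Rightarrow> nat \<Rightarrow> nat list set" where
  "comb_linext s n =
     {w. distinct w \<and> set w = {1..n} \<and>
         (\<forall>a < length w. \<forall>b < length w.
            comb_le s n (w ! a) (w ! b) \<and> w ! a \<noteq> w ! b \<longrightarrow> a < b)}"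

definition contains_pattern :: "nat list \<Rightarrow> nat list \<Rightarrow> bool" where
  "contains_pattern p w \<longleftrightarrow>
     (\<exists>f. strict_mono_on {..<length p} f \<and> (\<forall>a < length p. f a < length w) \<and>
          (\<forall>a < length p. \<forall>b < length p. (p ! a < p ! b \<longleftrightarrow> w ! f a < w ! f b)))"

definition avoids :: "nat list \<Rightarrow> nat list \<Rightarrow> bool" where
  "avoids p w \<longleftrightarrow> \<not> contains_pattern p w"

definition A_231_321_comb :: "nat \<Rightarrow> nat \<Rightarrow> nat" where
  "A_231_321_comb s n =
     card {w \<in> comb_linext s n. avoids [2,3,1] w \<and> avoids [3,2,1] w}"

end

theory Submission
  imports Defs
begin

definition nobad :: "nat list \<Rightarrow> bool" where
  "nobad w \<longleftrightarrow> (\<forall>i j k. i < j \<longrightarrow> j < k \<longrightarrow> k < length w \<longrightarrow> \<not> (w!k < w!i \<and> w!k < w!j))"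

lemma avoid_iff:
  assumes "distinct w"
  shows "(avoids [2,3,1] w \<and> avoids [3,2,1] w) \<longleftrightarrow> nobad w"
proof
  assume A: "avoids [2,3,1] w \<and> avoids [3,2,1] w"
  show "nobad w" unfolding nobad_def
  proof (intro allI impI notI)
    fix i j k assume ij: "i<j" and jk: "j<k" and k: "k < length w" and b: "w!k < w!i \<and> w!k < w!j"
    define f where "f = (\<lambda>a::nat. if a = 0 then i else if a = 1 then j else k)"
    have sm: "strict_mono_on {..<3} f" unfolding strict_mono_on_def f_def using ij jk by auto
    have fl: "\<forall>a<3. f a < length w" unfolding f_def using ij jk k by auto
    have "w!i \<noteq> w!j" using assms ij jk k by (simp add: nth_eq_iff_index_eq)
    then consider "w!i < w!j" | "w!j < w!i" by linarith
    then show False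
    proof cases
      case 1
      have "contains_pattern [2,3,1] w" unfolding contains_pattern_def
        apply (rule exI[of _ f]) using sm fl 1 b by (auto simp: f_def less_Suc_eq numeral_3_eq_3)
      then show False using A by (simp add: avoids_def)
    next
      case 2
      have "contains_pattern [3,2,1] w" unfolding contains_pattern_def
        apply (rule exI[of _ f]) using sm fl 2 b by (auto simp: f_def less_Suc_eq numeral_3_eq_3)
      then show False using A by (simp add: avoids_def)
    qed
  qed
next
  assume N: "nobad w"
  have "\<not> contains_pattern p w" if p: "p = [2,3,1] \<or> p = [3,2,1]" for p
  proof
    assume "contains_pattern p w"
    then obtain f where sm: "strict_mono_on {..<length p} f" and fl: "\<forall>a < length p. f a < length w"
      and o: "\<forall>a < length p. \<forall>b < length p. (p ! a < p ! b \<longleftrightarrow> w ! f a < w ! f b)"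
      unfolding contains_pattern_def by blast
    have lp: "length p = 3" using p by auto
    have "f 0 < f 1" "f 1 < f 2" using sm lp unfolding strict_mono_on_def by auto
    moreover have "f 2 < length w" using fl lp by auto
    moreover have "w ! f 2 < w ! f 0" "w ! f 2 < w ! f 1"
    proof -
      have a: "p ! 2 < p ! 0 \<longleftrightarrow> w ! f 2 < w ! f 0" "p ! 2 < p ! 1 \<longleftrightarrow> w ! f 2 < w ! f 1"
        using o lp by auto
      show "w ! f 2 < w ! f 0" "w ! f 2 < w ! f 1" using a p by auto
    qed
    ultimately show False using N unfolding nobad_def by blast
  qed
  then show "avoids [2,3,1] w \<and> avoids [3,2,1] w" by (simp add: avoids_def)
qed

lemma cover_lt: "s \<ge> 1 \<Longrightarrow> (x,y) \<in> comb_cover s n \<Longrightarrow> x < y"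
  unfolding comb_cover_def by auto

lemma comb_le_mono: assumes "s \<ge> 1" "comb_le s n x y" shows "x \<le> y"
proof -
  have "(x,y) \<in> (comb_cover s n)\<^sup>*" using assms(2) by (simp add: comb_le_def)
  then show ?thesis
    by (induction rule: rtrancl_induct) (auto dest: cover_lt[OF assms(1)])
qed

lemma comb_le_restrict:
  assumes "m \<le> n" "y \<le> m" "s \<ge> 1"
  shows "comb_le s n x y \<longleftrightarrow> comb_le s m x y"
proof
  assume "comb_le s n x y"
  then have "(x,y) \<in> (comb_cover s n)\<^sup>*" by (simp add: comb_le_def)
  then have "y \<le> m \<longrightarrow> (x,y) \<in> (comb_cover s m)\<^sup>*"
  proof (induction rule: rtrancl_induct)
    case base then show ?case by simp
  next
    case (step z y)
    show ?case
    proof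
      assume ym: "y \<le> m"
      have "z < y" using cover_lt[OF assms(3) step(2)] .
      then have "(x,z) \<in> (comb_cover s m)\<^sup>*" using step(3) ym by simp
      moreover have "(z,y) \<in> comb_cover s m" using step(2) ym unfolding comb_cover_def by auto
      ultimately show "(x,y) \<in> (comb_cover s m)\<^sup>*" by (rule rtrancl_into_rtrancl)
    qed
  qed
  then show "comb_le s m x y" using assms(2) by (simp add: comb_le_def)
next
  assume "comb_le s m x y"
  moreover have "comb_cover s m \<subseteq> comb_cover s n" using assms(1) unfolding comb_cover_def by auto
  ultimately show "comb_le s n x y" unfolding comb_le_def using rtrancl_mono by blast
qed

lemma comb_le_top:
  assumes "s \<ge> 1" "y > s" "comb_le s n x y" "x \<noteq> y"
  shows "x + s \<le> y"
proof -
  have "(x,y) \<in> (comb_cover s n)\<^sup>*" using assms(3) by (simp add: comb_le_def)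
  then obtain z where xz: "(x,z) \<in> (comb_cover s n)\<^sup>*" and zy: "(z,y) \<in> comb_cover s n"
    using assms(4) by (metis rtranclE)
  have "x \<le> z" using xz comb_le_mono[OF assms(1)] by (simp add: comb_le_def)
  moreover have "z + s = y" using zy assms(2) unfolding comb_cover_def by auto
  ultimately show ?thesis by simp
qed

lemma comb_le_cover: "(x,y) \<in> comb_cover s n \<Longrightarrow> comb_le s n x y"
  by (simp add: comb_le_def)

definition R :: "nat \<Rightarrow> nat \<Rightarrow> nat \<Rightarrow> nat \<Rightarrow> bool" where
  "R s n x y \<longleftrightarrow> \<not> (comb_le s n y x \<and> y \<noteq> x)"

lemma linext_iff:
  "comb_linext s n = {w. distinct w \<and> set w = {1..n} \<and> sorted_wrt (R s n) w}"
proof -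
  have "(\<forall>a<length w. \<forall>b<length w. comb_le s n (w ! a) (w ! b) \<and> w ! a \<noteq> w ! b \<longrightarrow> a < b)
    \<longleftrightarrow> (\<forall>i j. i < j \<longrightarrow> j < length w \<longrightarrow> \<not> (comb_le s n (w ! j) (w ! i) \<and> w ! j \<noteq> w ! i))" for w
  proof
    assume H: "\<forall>a<length w. \<forall>b<length w. comb_le s n (w ! a) (w ! b) \<and> w ! a \<noteq> w ! b \<longrightarrow> a < b"
    show "\<forall>i j. i < j \<longrightarrow> j < length w \<longrightarrow> \<not> (comb_le s n (w ! j) (w ! i) \<and> w ! j \<noteq> w ! i)"
    proof (intro allI impI notI)
      fix i j assume "i < j" "j < length w" "comb_le s n (w ! j) (w ! i) \<and> w ! j \<noteq> w ! i"
      then show False using H[rule_format, of j i] by auto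
    qed
  next
    assume H: "\<forall>i j. i < j \<longrightarrow> j < length w \<longrightarrow> \<not> (comb_le s n (w ! j) (w ! i) \<and> w ! j \<noteq> w ! i)"
    show "\<forall>a<length w. \<forall>b<length w. comb_le s n (w ! a) (w ! b) \<and> w ! a \<noteq> w ! b \<longrightarrow> a < b"
    proof (intro allI impI)
      fix a b assume "a < length w" "b < length w" "comb_le s n (w ! a) (w ! b) \<and> w ! a \<noteq> w ! b"
      then show "a < b" using H[rule_format, of b a] by (metis linorder_neqE_nat)
    qed
  qed
  then show ?thesis unfolding comb_linext_def sorted_wrt_iff_nth_less R_def by simp
qed

lemma nobad_prefix: "nobad (u @ v) \<Longrightarrow> nobad u"
  unfolding nobad_def
proof (intro allI impI notI)
  fix i j k assume H: "\<forall>i j k. i < j \<longrightarrow> j < k \<longrightarrow> k < length (u @ v) \<longrightarrow> \<not> ((u @ v) ! k < (u @ v) ! i \<and> (u @ v) ! k < (u @ v) ! j)"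
    and "i < j" "j < k" "k < length u" "u ! k < u ! i \<and> u ! k < u ! j"
  moreover have "(u @ v) ! i = u ! i" "(u @ v) ! j = u ! j" "(u @ v) ! k = u ! k"
    using \<open>k < length u\<close> \<open>i < j\<close> \<open>j < k\<close> by (auto simp: nth_append)
  ultimately show False using H[rule_format, of i j k] by simp
qed

lemma nobad_append:
  assumes "nobad u" "nobad v" "\<forall>x\<in>set u. \<forall>y\<in>set v. x < y"
  shows "nobad (u @ v)"
  unfolding nobad_def
proof (intro allI impI notI)
  fix i j k assume ij: "i < j" and jk: "j < k" and k: "k < length (u @ v)"
    and b: "(u @ v) ! k < (u @ v) ! i \<and> (u @ v) ! k < (u @ v) ! j"
  show False
  proof (cases "k < length u")
    case True
    have "\<not> (u ! k < u ! i \<and> u ! k < u ! j)" using assms(1) ij jk True unfolding nobad_def by blast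
    moreover have "(u @ v) ! i = u ! i" "(u @ v) ! j = u ! j" "(u @ v) ! k = u ! k"
      using True ij jk by (auto simp: nth_append)
    ultimately show False using b by simp
  next
    case False
    note kF = False
    show False
    proof (cases "i < length u")
      case True
      have "u ! i \<in> set u" using True by simp
      moreover have "v ! (k - length u) \<in> set v" using kF k by simp
      ultimately have "u ! i < v ! (k - length u)" using assms(3) by blast
      moreover have "(u @ v) ! i = u ! i" using True by (simp add: nth_append)
      moreover have "(u @ v) ! k = v ! (k - length u)" using kF by (simp add: nth_append)
      ultimately show False using b by simp
    next
      case False
      have a: "i - length u < j - length u" "j - length u < k - length u" "k - length u < length v"
        using ij jk k False by auto
      have "\<not> (v ! (k - length u) < v ! (i - length u) \<and> v ! (k - length u) < v ! (j - length u))"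
        using assms(2) a unfolding nobad_def by blast
      then show False using b False kF ij jk by (auto simp: nth_append)
    qed
  qed
qed

lemma nobad_block:
  assumes "sorted_wrt (<) v" "\<forall>y\<in>set v. y < n"
  shows "nobad (n # v)"
  unfolding nobad_def
proof (intro allI impI notI)
  fix i j k assume ij: "i < j" and jk: "j < k" and k: "k < length (n # v)"
    and b: "(n # v) ! k < (n # v) ! i \<and> (n # v) ! k < (n # v) ! j"
  obtain j' k' where j': "j = Suc j'" and k': "k = Suc k'" using ij jk by (cases j; cases k) auto
  have "v ! j' < v ! k'" using assms(1) j' k' jk k by (auto simp: sorted_wrt_iff_nth_less)
  then show False using b j' k' by auto
qed

definition S :: "nat \<Rightarrow> nat \<Rightarrow> nat list set" where
  "S s n = {w \<in> comb_linext s n. nobad w}"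

definition J :: "nat \<Rightarrow> nat \<Rightarrow> nat set" where
  "J s n = (if n \<le> s then {1} else {1..s})"

definition blk :: "nat \<Rightarrow> nat \<Rightarrow> nat list" where
  "blk n j = n # [n - j + 1..<n]"

lemma R_lt: "s \<ge> 1 \<Longrightarrow> x < y \<Longrightarrow> R s n x y"
  unfolding R_def using comb_le_mono by fastforce

lemma R_restrict: "s \<ge> 1 \<Longrightarrow> m \<le> n \<Longrightarrow> x \<le> m \<Longrightarrow> R s n x y = R s m x y"
  unfolding R_def using comb_le_restrict by metis

lemma S_iff: "w \<in> S s n \<longleftrightarrow> distinct w \<and> set w = {1..n} \<and> sorted_wrt (R s n) w \<and> nobad w"
  unfolding S_def linext_iff by auto

lemma construct:
  assumes s: "s \<ge> 1" and n: "n \<ge> 1" and j: "j \<in> J s n" and u: "u \<in> S s (n - j)"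
  shows "u @ blk n j \<in> S s n"
proof -
  have j1: "1 \<le> j" and jn: "j \<le> n" and js: "n > s \<Longrightarrow> j \<le> s" and js2: "n \<le> s \<Longrightarrow> j = 1"
    using j n unfolding J_def by (auto split: if_splits)
  have du: "distinct u" and su: "set u = {1..n-j}" and ru: "sorted_wrt (R s (n-j)) u" and bu: "nobad u"
    using u by (auto simp: S_iff)
  let ?t = "[n - j + 1..<n]"
  have st: "set ?t = {n-j+1..<n}" by simp
  have sb: "set (blk n j) = {n-j+1..n}" unfolding blk_def using j1 jn by auto
  have "distinct (blk n j)" unfolding blk_def by simp
  moreover have "set u \<inter> set (blk n j) = {}" unfolding sb su by auto
  ultimately have "distinct (u @ blk n j)" using du by simp
  moreover have "set (u @ blk n j) = {1..n}" unfolding set_append sb su using j1 jn by auto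
  moreover have "sorted_wrt (R s n) (u @ blk n j)"
  proof -
    have "sorted_wrt (R s n) u"
      using ru by (rule sorted_wrt_mono_rel[rotated]) (use R_restrict[OF s, of "n-j" n] su in auto)
    moreover have "sorted_wrt (R s n) ?t"
      using sorted_wrt_upt[of "n-j+1" n] by (rule sorted_wrt_mono_rel[rotated]) (use R_lt[OF s] in auto)
    moreover have "R s n n y" if "y \<in> set ?t" for y
    proof (cases "n \<le> s")
      case True then show ?thesis using that js2 by simp
    next
      case False
      have "\<not> (comb_le s n y n \<and> y \<noteq> n)"
      proof
        assume "comb_le s n y n \<and> y \<noteq> n"
        then have "y + s \<le> n" using comb_le_top[OF s, of n n y] False by auto
        then show False using that js False by auto
      qed
      then show ?thesis by (simp add: R_def)
    qed
    moreover have "R s n x y" if "x \<in> set u" "y \<in> set (blk n j)" for x y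
    proof -
      have "x < y" using that unfolding sb su by auto
      then show ?thesis using R_lt[OF s] by blast
    qed
    ultimately show ?thesis unfolding blk_def sorted_wrt_append by simp
  qed
  moreover have "nobad (u @ blk n j)"
    unfolding blk_def
    by (rule nobad_append[OF bu nobad_block]) (use su j1 jn in auto)
  ultimately show ?thesis by (simp add: S_iff)
qed

lemma decompose:
  assumes s: "s \<ge> 1" and n: "n \<ge> 1" and w: "w \<in> S s n"
  shows "\<exists>j\<in>J s n. \<exists>u\<in>S s (n - j). w = u @ blk n j"
proof -
  have dw: "distinct w" and sw: "set w = {1..n}" and rw: "sorted_wrt (R s n) w" and bw: "nobad w"
    using w by (auto simp: S_iff)
  have "n \<in> set w" using sw n by auto
  then obtain u v where wuv: "w = u @ n # v" by (meson split_list)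
  have nu: "n \<notin> set u" and nv: "n \<notin> set v" and disj: "set u \<inter> set v = {}"
    and du: "distinct u" and dv: "distinct v" using dw wuv by auto
  have len: "length w = n" using distinct_card[OF dw] sw by simp
  define m where "m = length u"
  have lv: "length v = n - 1 - m" using len wuv m_def by simp
  have mn: "m < n" using len wuv m_def by simp
  have setuv: "set u \<union> set v = {1..<n}"
  proof -
    have "set u \<union> set v \<union> {n} = {1..n}" using sw wuv by auto
    then have "set u \<union> set v = {1..n} - {n}" using nu nv by blast
    also have "\<dots> = {1..<n}" by auto
    finally show ?thesis .
  qed
  have wm: "w ! m = n" using wuv m_def by (simp add: nth_append)
  have wv: "w ! (m + Suc i) = v ! i" for i using wuv m_def by (simp add: nth_append)
  have wu: "a < m \<Longrightarrow> w ! a = u ! a" for a using wuv m_def by (simp add: nth_append)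
  have vsorted: "sorted_wrt (<) v"
    unfolding sorted_wrt_iff_nth_less
  proof (intro allI impI)
    fix i j assume ij: "i < j" and jl: "j < length v"
    show "v ! i < v ! j"
    proof (rule ccontr)
      assume "\<not> v ! i < v ! j"
      moreover have "v ! i \<noteq> v ! j" using dv ij jl by (simp add: nth_eq_iff_index_eq)
      ultimately have a: "v ! j < v ! i" by simp
      have "v ! j \<in> set v" using jl by simp
      then have b: "v ! j < n" using setuv by auto
      have "m < m + Suc i" "m + Suc i < m + Suc j" "m + Suc j < length w" using ij jl len lv mn by auto
      then have "\<not> (w ! (m + Suc j) < w ! m \<and> w ! (m + Suc j) < w ! (m + Suc i))"
        using bw unfolding nobad_def by blast
      then show False using a b wm wv by simp
    qed
  qed
  have cross: "x < y" if x: "x \<in> set u" and y: "y \<in> set v" for x y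
  proof (rule ccontr)
    assume "\<not> x < y"
    moreover have "x \<noteq> y" using disj x y by auto
    ultimately have a: "y < x" by simp
    obtain a where a1: "a < m" and a2: "u ! a = x" using x m_def by (auto simp: in_set_conv_nth)
    obtain b where b1: "b < length v" and b2: "v ! b = y" using y by (auto simp: in_set_conv_nth)
    have "y < n" using y setuv by auto
    have "a < m" "m < m + Suc b" "m + Suc b < length w" using a1 b1 len lv mn by auto
    then have "\<not> (w ! (m + Suc b) < w ! a \<and> w ! (m + Suc b) < w ! m)"
      using bw unfolding nobad_def by blast
    then show False using \<open>y < x\<close> \<open>y < n\<close> wm wv wu[OF a1] a2 b2 by simp
  qed
  have usub: "set u \<subseteq> {1..m}"
  proof
    fix x assume x: "x \<in> set u"
    have x1: "1 \<le> x" "x < n" using x setuv by auto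
    show "x \<in> {1..m}"
    proof (rule ccontr)
      assume "x \<notin> {1..m}"
      then have xm: "x > m" using x1 by auto
      have "set v \<subseteq> {x<..<n}" using cross[OF x] setuv by auto
      then have "card (set v) \<le> card {x<..<n}" by (intro card_mono) auto
      then have "n - 1 - m \<le> n - Suc x" using distinct_card[OF dv] lv by simp
      then show False using xm x1 mn by linarith
    qed
  qed
  have su: "set u = {1..m}"
    using card_subset_eq[OF _ usub] distinct_card[OF du] m_def by simp
  have "set v = {1..<n} - {1..m}" using setuv disj su by blast
  also have "\<dots> = {m+1..<n}" by auto
  finally have sv: "set v = {m+1..<n}" .
  have veq: "v = [m+1..<n]"
    using sorted_distinct_set_unique[of v "[m+1..<n]"] vsorted sv dv
    by (simp add: strict_sorted_iff)
  define j where "j = n - m"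
  have j1: "j \<ge> 1" and nj: "n - j = m" and nj1: "n - j + 1 = m + 1" using mn j_def by auto
  have weq: "w = u @ blk n j" unfolding blk_def wuv veq nj1 ..
  have uS: "u \<in> S s m"
  proof -
    have "sorted_wrt (R s n) u" using rw wuv by (simp add: sorted_wrt_append)
    then have "sorted_wrt (R s m) u"
      by (rule sorted_wrt_mono_rel[rotated]) (use R_restrict[OF s, of m n] su mn in auto)
    moreover have "nobad u" using bw wuv nobad_prefix by blast
    ultimately show ?thesis using du su by (simp add: S_iff)
  qed
  have hd: "R s n n y" if "y \<in> set v" for y
    using rw wuv that by (simp add: sorted_wrt_append)
  have jJ: "j \<in> J s n"
  proof (cases "n \<le> s")
    case True
    have "j = 1"
    proof (rule ccontr)
      assume "j \<noteq> 1"
      then have "n - 1 \<in> set v" using sv j1 j_def mn by auto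
      moreover have "(n - 1, n) \<in> comb_cover s n" unfolding comb_cover_def
        using True \<open>j \<noteq> 1\<close> j_def mn by auto
      ultimately show False using hd[of "n-1"] comb_le_cover n unfolding R_def by fastforce
    qed
    then show ?thesis using True by (simp add: J_def)
  next
    case False
    have "j \<le> s"
    proof (rule ccontr)
      assume "\<not> j \<le> s"
      then have "n - s \<in> set v" using sv j_def mn s False by auto
      moreover have "(n - s, n) \<in> comb_cover s n" unfolding comb_cover_def
        using False by auto
      moreover have "n - s \<noteq> n" using s \<open>\<not> n \<le> s\<close> by simp
      ultimately show False using hd[of "n-s"] comb_le_cover unfolding R_def by blast
    qed
    then show ?thesis using False j1 by (simp add: J_def)
  qed
  show ?thesis using jJ uS weq nj by auto
qed

lemma S_finite: "finite (S s n)"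
proof (rule finite_subset)
  show "S s n \<subseteq> {w. set w \<subseteq> {1..n} \<and> length w = n}"
  proof
    fix w assume "w \<in> S s n"
    then have "distinct w" "set w = {1..n}" by (auto simp: S_iff)
    then show "w \<in> {w. set w \<subseteq> {1..n} \<and> length w = n}" using distinct_card by fastforce
  qed
  show "finite {w. set w \<subseteq> {1..n} \<and> length w = (n::nat)}" by (rule finite_lists_length_eq) simp
qed

lemma S_decomp:
  assumes s: "s \<ge> 1" and n: "n \<ge> 1"
  shows "S s n = (\<Union>j\<in>J s n. (\<lambda>u. u @ blk n j) ` S s (n - j))"
proof
  show "S s n \<subseteq> (\<Union>j\<in>J s n. (\<lambda>u. u @ blk n j) ` S s (n - j))"
  proof
    fix w assume "w \<in> S s n"
    then obtain j u where "j \<in> J s n" "u \<in> S s (n - j)" "w = u @ blk n j"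
      using decompose[OF s n] by blast
    then show "w \<in> (\<Union>j\<in>J s n. (\<lambda>u. u @ blk n j) ` S s (n - j))" by blast
  qed
  show "(\<Union>j\<in>J s n. (\<lambda>u. u @ blk n j) ` S s (n - j)) \<subseteq> S s n"
    using construct[OF s n] by blast
qed

lemma card_S:
  assumes s: "s \<ge> 1" and n: "n \<ge> 1"
  shows "card (S s n) = (\<Sum>j\<in>J s n. card (S s (n - j)))"
proof -
  have Jb: "1 \<le> j \<and> j \<le> n" if "j \<in> J s n" for j using that n unfolding J_def by (auto split: if_splits)
  have "card (S s n) = (\<Sum>j\<in>J s n. card ((\<lambda>u. u @ blk n j) ` S s (n - j)))"
    unfolding S_decomp[OF s n]
  proof (rule card_UN_disjoint)
    show "finite (J s n)" unfolding J_def by simp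
    show "\<forall>j\<in>J s n. finite ((\<lambda>u. u @ blk n j) ` S s (n - j))" using S_finite by blast
    show "\<forall>i\<in>J s n. \<forall>j\<in>J s n. i \<noteq> j \<longrightarrow>
      (\<lambda>u. u @ blk n i) ` S s (n - i) \<inter> (\<lambda>u. u @ blk n j) ` S s (n - j) = {}"
    proof (intro ballI impI)
      fix i j assume i: "i \<in> J s n" and j: "j \<in> J s n" and ij: "i \<noteq> j"
      show "(\<lambda>u. u @ blk n i) ` S s (n - i) \<inter> (\<lambda>u. u @ blk n j) ` S s (n - j) = {}"
      proof (rule ccontr)
        assume "\<not> ?thesis"
        then obtain u u' where u: "u \<in> S s (n - i)" and u': "u' \<in> S s (n - j)"
          and eq: "u @ blk n i = u' @ blk n j" by blast
        have "set u = {1..n-i}" "set u' = {1..n-j}" using u u' by (auto simp: S_iff)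
        then have "n \<notin> set u" "n \<notin> set u'" using Jb[OF i] Jb[OF j] by auto
        moreover have "n \<notin> set [n - i + 1..<n]" by simp
        ultimately have "[n - i + 1..<n] = [n - j + 1..<n]"
          using eq append_Cons_eq_iff[of n u "[n - i + 1..<n]" u' "[n - j + 1..<n]"]
          unfolding blk_def by simp
        then have "length [n - i + 1..<n] = length [n - j + 1..<n]" by simp
        then have "i - 1 = j - 1" using Jb[OF i] Jb[OF j] by simp
        then show False using Jb[OF i] Jb[OF j] ij by linarith
      qed
    qed
  qed
  also have "\<dots> = (\<Sum>j\<in>J s n. card (S s (n - j)))"
    by (rule sum.cong) (auto intro!: card_image inj_onI)
  finally show ?thesis .
qed

lemma S0: "S s 0 = {[]}"
  by (auto simp: S_iff nobad_def)

lemma A_card: "A_231_321_comb s n = card (S s n)"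
proof -
  have "{w \<in> comb_linext s n. avoids [2,3,1] w \<and> avoids [3,2,1] w} = S s n"
    unfolding S_def using avoid_iff by (auto simp: linext_iff)
  then show ?thesis unfolding A_231_321_comb_def by simp
qed

lemma small: "s \<ge> 1 \<Longrightarrow> n \<le> s \<Longrightarrow> card (S s n) = 1"
proof (induction n)
  case 0 then show ?case by (simp add: S0)
next
  case (Suc k)
  have "card (S s (Suc k)) = (\<Sum>j\<in>J s (Suc k). card (S s (Suc k - j)))"
    using card_S[OF Suc.prems(1)] by simp
  also have "\<dots> = card (S s k)" using Suc.prems by (simp add: J_def)
  finally show ?case using Suc by simp
qed

theorem theorem7:
  fixes s n :: nat
  assumes "s \<ge> 1"
  shows "(n \<le> s \<longrightarrow> A_231_321_comb s n = 1) \<and>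
         (n > s \<longrightarrow> A_231_321_comb s n = (\<Sum>j = 1..s. A_231_321_comb s (n - j)))"
proof (intro conjI impI)
  assume "n \<le> s" then show "A_231_321_comb s n = 1" using small assms by (simp add: A_card)
next
  assume ns: "n > s"
  then have "card (S s n) = (\<Sum>j\<in>J s n. card (S s (n - j)))" using card_S assms by simp
  then show "A_231_321_comb s n = (\<Sum>j = 1..s. A_231_321_comb s (n - j))"
    using ns by (simp add: A_card J_def)
qed

end
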